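(* Let $n\ge3$ and let $A$ be a set of $m$ vertices of $C_n$ with $2\le m\le n$. The following are equivalent: (1) $A$ is a maximizer of $W$ on $C_n$; (2) $A$ is a local maximizer of $W$ on $C_n$; (3) if $m$ is odd then $\mathrm{supp}(\sigma^*_{\lfloor m/2\rfloor}(A))\subseteq\{1,\dots,\lfloor n/2\rfloor\}$, and if $m$ is even then $\mathrm{supp}(\sigma^*_{m/2}(A))\subseteq\{\lfloor n/2\rfloor,\lceil n/2\rceil\}$; (4) for all integers $k$ with $1\le k<\frac m2$ we have $\sigma_k(A)=\sigma^*_k(A)$, and, if $m$ is even, $\mathrm{supp}(\sigma_{m/2}(A))=\{\lfloor n/2\rfloor\}$.
   Context: $C_n$ has vertex set $\{0,\dots,n-1\}$ with $i$ adjacent to $i+1\bmod n$. $d(u,v)$ is geodesic distance; $d^*(u,v)$ is the least non-negative integer congruent to $v-u$ mod $n$. $W(A)=\sum_{\{u,v\}\subseteq A,u\ne v}d(u,v)$ over unordered pairs. $A$ is a maximizer of $W$ if $W(A)=\max\{W(B):|B|=|A|\}$; a perturbation of $A$ is $(A\setminus\{u\})\cup\{v\}$ with $u\in A$, $v\notin A$, $uv$ an edge, and $A$ is a local maximizer if $W(A)\ge W(B)$ for every perturbation $B$. For $A=\{a_0<\dots<a_{m-1}\}$, $\mathrm{span}_A(a_i,a_j)$ is the least positive integer congruent to $j-i$ mod $m$; $\sigma_k(A)=[\,d(u,v):u,v\in A,u\ne v,\mathrm{span}_A(u,v)=k\,]$ and $\sigma^*_k(A)=[\,d^*(u,v):u,v\in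 A,u\ne v,\mathrm{span}_A(u,v)=k\,]$ are multisets over ordered pairs; $\mathrm{supp}$ denotes the underlying set of a multiset. *)

theory Defs
  imports Main "HOL-Library.Multiset"
begin

text \<open>The cycle C_n has vertex set {0..<n}; i adjacent to (i+1) mod n.\<close>

definition cyc_adj :: "nat \<Rightarrow> nat \<Rightarrow> nat \<Rightarrow> bool" where
  "cyc_adj n u v \<longleftrightarrow> v = (u + 1) mod n \<or> u = (v + 1) mod n"

definition dstar :: "nat \<Rightarrow> nat \<Rightarrow> nat \<Rightarrow> nat" where
  "dstar n u v = nat ((int v - int u) mod int n)"

definition cdist :: "nat \<Rightarrow> nat \<Rightarrow> nat \<Rightarrow> nat" where
  "cdist n u v = min (dstar n u v) (dstar n v u)"

definition W :: "nat \<Rightarrow> nat set \<Rightarrow> nat" where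
  "W n A = (\<Sum>(u,v)\<in>{(u,v). u \<in> A \<and> v \<in> A \<and> u < v}. cdist n u v)"

definition is_maximizer :: "nat \<Rightarrow> nat set \<Rightarrow> bool" where
  "is_maximizer n A \<longleftrightarrow>
     (\<forall>B. B \<subseteq> {0..<n} \<and> card B = card A \<longrightarrow> W n B \<le> W n A)"

definition perturbation :: "nat \<Rightarrow> nat set \<Rightarrow> nat set \<Rightarrow> bool" where
  "perturbation n A B \<longleftrightarrow>
     (\<exists>u v. u \<in> A \<and> v \<in> {0..<n} \<and> v \<notin> A \<and> cyc_adj n u v \<and> B = (A - {u}) \<union> {v})"

definition is_local_maximizer :: "nat \<Rightarrow> nat set \<Rightarrow> bool" where
  "is_local_maximizer n A \<longleftrightarrow> (\<forall>B. perturbation n A B \<longrightarrow> W n B \<le> W n A)"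

definition idx :: "nat set \<Rightarrow> nat \<Rightarrow> nat" where
  "idx A a = card {x \<in> A. x < a}"

definition span :: "nat set \<Rightarrow> nat \<Rightarrow> nat \<Rightarrow> nat" where
  "span A u v = (let r = nat ((int (idx A v) - int (idx A u)) mod int (card A))
                 in if r = 0 then card A else r)"

definition span_pairs :: "nat set \<Rightarrow> nat \<Rightarrow> (nat \<times> nat) set" where
  "span_pairs A k = {(u,v). u \<in> A \<and> v \<in> A \<and> u \<noteq> v \<and> span A u v = k}"

definition sigma :: "nat \<Rightarrow> nat set \<Rightarrow> nat \<Rightarrow> nat multiset" where
  "sigma n A k = image_mset (\<lambda>(u,v). cdist n u v) (mset_set (span_pairs A k))"

definition sigma_star :: "nat \<Rightarrow> nat set \<Rightarrow> nat \<Rightarrow> nat multiset" where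
  "sigma_star n A k = image_mset (\<lambda>(u,v). dstar n u v) (mset_set (span_pairs A k))"

end

theory Submission
  imports Defs
begin



lemma dstar_eq:
  assumes "t < n" "int y mod int n = (int x + int t) mod int n"
  shows "dstar n x y = t"
proof -
  have "(int y - int x) mod int n = ((int x + int t) - int x) mod int n"
    using assms(2) by (metis mod_diff_left_eq)
  also have "\<dots> = int t" using assms(1) by simp
  finally show ?thesis unfolding dstar_def by simp
qed

lemma dstar_self: "dstar n u u = 0" unfolding dstar_def by simp

lemma cdist_sym: "cdist n u v = cdist n v u" unfolding cdist_def by simp

lemma cdist_self: "cdist n u u = 0" unfolding cdist_def by (simp add: dstar_self)

lemma dstar_lt: "0 < n \<Longrightarrow> dstar n u v < n"
  unfolding dstar_def by (simp add: nat_less_iff)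

lemma dstar_swap:
  assumes "0 < n" "0 < dstar n u v"
  shows "dstar n v u = n - dstar n u v"
proof -
  have h: "(int v - int u) mod int n \<noteq> 0" using assms unfolding dstar_def by auto
  have "(int u - int v) mod int n = int n - (int v - int u) mod int n"
    using zmod_zminus1_eq_if[of "int v - int u" "int n"] h by (simp only: minus_diff_eq if_False)
  moreover have "0 \<le> (int v - int u) mod int n" "(int v - int u) mod int n \<le> int n"
    using assms(1) by (simp_all add: order.strict_implies_order)
  ultimately show ?thesis unfolding dstar_def by (simp add: nat_diff_distrib)
qed

lemma W2:
  assumes "finite C"
  shows "2 * W n C = (\<Sum>u\<in>C. \<Sum>v\<in>C. cdist n u v)"
proof -
  define f where "f = (\<lambda>(u,v). cdist n u v)"
  define S1 where "S1 = {(u,v). u \<in> C \<and> v \<in> C \<and> u < v}"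
  define S2 where "S2 = {(u,v). u \<in> C \<and> v \<in> C \<and> v < u}"
  define S3 where "S3 = {(u,v). u \<in> C \<and> v \<in> C \<and> u = v}"
  have fin: "finite (C \<times> C)" using assms by simp
  have eq: "C \<times> C = S1 \<union> (S2 \<union> S3)" unfolding S1_def S2_def S3_def by auto
  have f1: "finite S1" "finite S2" "finite S3"
    using fin unfolding S1_def S2_def S3_def by (auto intro: finite_subset[OF _ fin])
  have "(\<Sum>u\<in>C. \<Sum>v\<in>C. cdist n u v) = sum f (C \<times> C)"
    unfolding f_def by (simp add: sum.cartesian_product)
  also have "\<dots> = sum f S1 + (sum f S2 + sum f S3)"
    unfolding eq using f1
    by (simp add: sum.union_disjoint S1_def S2_def S3_def disjoint_iff)
  also have "sum f S3 = 0" unfolding S3_def f_def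
    by (intro sum.neutral) (auto simp: cdist_self)
  also have "S2 = prod.swap ` S1" unfolding S1_def S2_def by auto
  also have "sum f (prod.swap ` S1) = sum (f \<circ> prod.swap) S1"
    by (intro sum.reindex) simp
  also have "sum (f \<circ> prod.swap) S1 = sum f S1"
    unfolding f_def by (intro sum.cong) (auto simp: cdist_sym)
  finally show ?thesis unfolding W_def S1_def f_def by simp
qed

lemma W2_insert:
  assumes "finite C" "x \<notin> C"
  shows "2 * W n (insert x C) = 2 * W n C + 2 * (\<Sum>b\<in>C. cdist n x b)"
proof -
  have "2 * W n (insert x C) = (\<Sum>u\<in>insert x C. \<Sum>v\<in>insert x C. cdist n u v)"
    using W2 assms by simp
  also have "\<dots> = (\<Sum>v\<in>C. cdist n x v) + (\<Sum>u\<in>C. cdist n u x + (\<Sum>v\<in>C. cdist n u v))"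
    using assms by (simp add: cdist_self)
  also have "\<dots> = (\<Sum>u\<in>C. \<Sum>v\<in>C. cdist n u v) + 2 * (\<Sum>b\<in>C. cdist n x b)"
    by (simp add: sum.distrib cdist_sym)
  finally show ?thesis using W2 assms by simp
qed




locale cyc =
  fixes n :: nat and A :: "nat set" and m :: nat
  assumes sub: "A \<subseteq> {0..<n}" and cardA: "card A = m" and m2: "2 \<le> m"
begin

definition a where "a i = sorted_list_of_set A ! i"
definition P where "P j = a (j mod m) + n * (j div m)"
definition D where "D j k = P (j + k) - P j"
definition c where "c j k = min (D j k) (n - D j k)"

lemma finA: "finite A" using sub finite_subset by blast

lemma m_le_n: "m \<le> n"
  using card_mono[OF _ sub] cardA by simp

lemma m_pos: "0 < m" using m2 by simp
lemma n_pos: "0 < n" using m2 m_le_n by simp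

lemma len: "length (sorted_list_of_set A) = m" using cardA by simp

lemma a_mono: "i < j \<Longrightarrow> j < m \<Longrightarrow> a i < a j"
  unfolding a_def using len sorted_wrt_nth_less[OF strict_sorted_list_of_set[of A], of i j] by simp

lemma a_mono_le: "i \<le> j \<Longrightarrow> j < m \<Longrightarrow> a i \<le> a j"
  using a_mono by (cases "i = j") (auto intro: less_imp_le)

lemma a_in: "i < m \<Longrightarrow> a i \<in> A"
  unfolding a_def using len finA by (metis nth_mem set_sorted_list_of_set)

lemma a_lt_n: "i < m \<Longrightarrow> a i < n"
  by (meson a_in sub atLeastLessThan_iff subsetD)

lemma A_eq: "A = a ` {..<m}"
proof -
  have "A = set (sorted_list_of_set A)" using finA by simp
  also have "\<dots> = a ` {..<m}" unfolding a_def using len by (auto simp: set_conv_nth)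
  finally show ?thesis .
qed

lemma a_inj: "inj_on a {..<m}"
  by (rule inj_onI) (metis lessThan_iff a_mono nat_neq_iff less_irrefl)

lemma a_eq_iff: "i < m \<Longrightarrow> j < m \<Longrightarrow> a i = a j \<longleftrightarrow> i = j"
  using a_inj by (auto dest: inj_onD)

lemma idx_a: assumes "i < m" shows "idx A (a i) = i"
proof -
  have "{x \<in> A. x < a i} = a ` {..<i}"
  proof
    show "{x \<in> A. x < a i} \<subseteq> a ` {..<i}"
    proof
      fix x assume "x \<in> {x \<in> A. x < a i}"
      then obtain j where j: "j < m" "x = a j" "a j < a i" using A_eq by auto
      then have "j < i" using a_mono_le[of i j] assms by (meson not_less)
      then show "x \<in> a ` {..<i}" using j by auto
    qed
    show "a ` {..<i} \<subseteq> {x \<in> A. x < a i}"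
      using assms a_in a_mono by auto
  qed
  moreover have "inj_on a {..<i}" using a_inj assms
    by (meson inj_on_subset lessThan_subset_iff less_imp_le)
  ultimately show ?thesis unfolding idx_def by (simp add: card_image)
qed

lemma P_m: "P (j + m) = P j + n"
proof -
  have "(j + m) div m = Suc (j div m)" using m_pos by (simp add: div_add_self2)
  then show ?thesis unfolding P_def by simp
qed

lemma P_qm: "P (j + q * m) = P j + q * n"
proof (induction q)
  case 0 then show ?case by simp
next
  case (Suc q)
  have "P (j + Suc q * m) = P ((j + q * m) + m)" by (rule arg_cong[where f=P]) simp
  then have "P (j + Suc q * m) = P (j + q * m) + n" using P_m[of "j + q * m"] by simp
  then show ?case using Suc by simp
qed

lemma P_Suc: "P j < P (Suc j)"
proof (cases "Suc (j mod m) = m")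
  case False
  then have "Suc j mod m = Suc (j mod m)" "Suc j div m = j div m"
    by (simp_all add: mod_Suc div_Suc)
  moreover have "Suc (j mod m) < m" using False mod_less_divisor[OF m_pos, of j] by linarith
  ultimately show ?thesis unfolding P_def using a_mono[of "j mod m" "Suc (j mod m)"] by simp
next
  case True
  then have jm: "j mod m = m - 1" by simp
  have "Suc j mod m = 0" "Suc j div m = Suc (j div m)"
    using True by (simp_all add: mod_Suc div_Suc)
  moreover have "a (m - 1) < n" using a_lt_n m_pos by simp
  ultimately show ?thesis unfolding P_def using jm by simp
qed

lemma P_mono: "strict_mono P"
  using P_Suc strict_mono_Suc_iff by blast

lemma P_less: "j < k \<Longrightarrow> P j < P k" using P_mono strict_mono_less by blast
lemma P_le: "j \<le> k \<Longrightarrow> P j \<le> P k" using P_mono strict_mono_less_eq by blast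

lemma P_a: "i < m \<Longrightarrow> P i = a i" unfolding P_def by simp

lemma P_cong: "int (P j) mod int n = int (a (j mod m)) mod int n"
  unfolding P_def by simp

lemma D_add: "D j (k + l) = D j k + D (j + k) l"
  unfolding D_def using P_le[of j "j + k"] P_le[of "j + k" "j + k + l"] by (simp add: add.assoc)

lemma D_pos: "0 < k \<Longrightarrow> 0 < D j k"
  unfolding D_def using P_less by simp

lemma D_mono: "k < l \<Longrightarrow> D j k < D j l"
  using D_add[of j k "l - k"] D_pos[of "l - k" "j + k"] by simp

lemma D_m: "D j m = n" unfolding D_def using P_m by simp

lemma D_lt: "k < m \<Longrightarrow> D j k < n" using D_mono D_m by metis

lemma D_compl: "k \<le> m \<Longrightarrow> D (j + k) (m - k) = n - D j k"
  using D_add[of j k "m - k"] D_m by simp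

lemma D_mod: "D (j mod m) k = D j k"
proof -
  have "j = j mod m + (j div m) * m" by simp
  then have "D j k = D (j mod m + (j div m) * m) k" by simp
  also have "\<dots> = D (j mod m) k" unfolding D_def
    using P_qm[of "j mod m" "j div m"] P_qm[of "j mod m + k" "j div m"]
    by (simp add: algebra_simps)
  finally show ?thesis by simp
qed

lemma dstar_a: assumes "k < m" shows "dstar n (a (j mod m)) (a ((j + k) mod m)) = D j k"
proof (rule dstar_eq)
  show "D j k < n" using D_lt assms by simp
  have "int (a ((j + k) mod m)) mod int n = int (P (j + k)) mod int n" using P_cong by simp
  also have "int (P (j + k)) = int (P j) + int (D j k)" unfolding D_def using P_le by simp
  also have "(int (P j) + int (D j k)) mod int n = (int (a (j mod m)) + int (D j k)) mod int n"
    using P_cong by (metis mod_add_left_eq)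
  finally show "int (a ((j + k) mod m)) mod int n = (int (a (j mod m)) + int (D j k)) mod int n" .
qed

lemma cdist_a: assumes "0 < k" "k < m" shows "cdist n (a (j mod m)) (a ((j + k) mod m)) = c j k"
proof -
  have d: "dstar n (a (j mod m)) (a ((j + k) mod m)) = D j k" using dstar_a assms by simp
  then have "dstar n (a ((j + k) mod m)) (a (j mod m)) = n - D j k"
    using dstar_swap n_pos D_pos assms by simp
  then show ?thesis unfolding cdist_def c_def using d by simp
qed

lemma sumP: "(\<Sum>i<m. P (i + k)) = (\<Sum>i<m. P i) + k * n"
proof (induction k)
  case 0 then show ?case by simp
next
  case (Suc k)
  have "(\<Sum>i<m. P (i + Suc k)) = (\<Sum>i<m. P (Suc i + k))" by simp
  also have "\<dots> + P (0 + k) = (\<Sum>i<m. P (i + k)) + P (m + k)"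
    using sum.lessThan_Suc_shift[of "\<lambda>i. P (i + k)" m] sum.lessThan_Suc[of "\<lambda>i. P (i + k)" m]
    by simp
  also have "P (m + k) = P k + n" using P_m[of k] by (simp add: add.commute)
  finally show ?case using Suc by simp
qed

lemma sumD: "(\<Sum>i<m. D i k) = k * n"
proof -
  have "(\<Sum>i<m. D i k) = (\<Sum>i<m. P (i + k)) - (\<Sum>i<m. P i)"
    unfolding D_def by (rule sum_subtractf_nat) (simp add: P_le)
  then show ?thesis using sumP by simp
qed

end



context cyc begin

lemma shift_inv1: assumes "i < m" "k < m" shows "((i + k) mod m + (m - i)) mod m = k"
proof -
  have "((i + k) mod m + (m - i)) mod m = (i + k + (m - i)) mod m" by (simp add: mod_add_left_eq)
  also have "i + k + (m - i) = k + m" using assms by simp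
  finally show ?thesis using assms by simp
qed

lemma shift_inv2: assumes "i < m" "j < m" shows "(i + (j + (m - i)) mod m) mod m = j"
proof -
  have "(i + (j + (m - i)) mod m) mod m = (i + (j + (m - i))) mod m" by (simp add: mod_add_right_eq)
  also have "i + (j + (m - i)) = j + m" using assms by simp
  finally show ?thesis using assms by simp
qed

lemma sum_shift: assumes "i < m" shows "(\<Sum>k<m. f ((i + k) mod m)) = (\<Sum>k<m. (f k :: nat))"
  by (rule sum.reindex_bij_witness[where i="\<lambda>j. (j + (m - i)) mod m" and j="\<lambda>k. (i + k) mod m"])
    (use assms shift_inv1 shift_inv2 m_pos in auto)

lemma dstar_a': "i < m \<Longrightarrow> k < m \<Longrightarrow> dstar n (a i) (a ((i + k) mod m)) = D i k"
  using dstar_a[of k i] by simp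

lemma cdist_a': "i < m \<Longrightarrow> 0 < k \<Longrightarrow> k < m \<Longrightarrow> cdist n (a i) (a ((i + k) mod m)) = c i k"
  using cdist_a[of k i] by simp

lemma sumA: "sum g A = (\<Sum>i<m. g (a i))"
proof -
  have "sum g (a ` {..<m}) = (\<Sum>i<m. g (a i))" using a_inj by (simp add: sum.reindex)
  then show ?thesis by (simp only: A_eq[symmetric])
qed

lemma W_index: "2 * W n A = (\<Sum>k\<in>{1..<m}. \<Sum>i<m. c i k)"
proof -
  have "2 * W n A = (\<Sum>u\<in>A. \<Sum>v\<in>A. cdist n u v)" using W2 finA by simp
  also have "\<dots> = (\<Sum>i<m. \<Sum>j<m. cdist n (a i) (a j))"
    by (simp only: sumA)
  also have "\<dots> = (\<Sum>i<m. \<Sum>k<m. cdist n (a i) (a ((i + k) mod m)))"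
  proof -
    have sh: "(\<Sum>k<m. cdist n (a i) (a ((i + k) mod m))) = (\<Sum>j<m. cdist n (a i) (a j))"
      if "i < m" for i using sum_shift[of i "\<lambda>j. cdist n (a i) (a j)"] that by simp
    show ?thesis by (rule sum.cong[OF refl]) (use sh in simp)
  qed
  also have "\<dots> = (\<Sum>i<m. \<Sum>k\<in>{1..<m}. c i k)"
  proof (rule sum.cong[OF refl])
    fix i assume i: "i \<in> {..<m}"
    have "{..<m} = insert 0 {1..<m}" using m_pos by auto
    then have "(\<Sum>k<m. cdist n (a i) (a ((i + k) mod m))) =
        cdist n (a i) (a (i mod m)) + (\<Sum>k\<in>{1..<m}. cdist n (a i) (a ((i + k) mod m)))"
      by simp
    also have "\<dots> = (\<Sum>k\<in>{1..<m}. c i k)"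
      using cdist_a'[of i] i by (simp add: cdist_self)
    finally show "(\<Sum>k<m. cdist n (a i) (a ((i + k) mod m))) = (\<Sum>k\<in>{1..<m}. c i k)" .
  qed
  also have "\<dots> = (\<Sum>k\<in>{1..<m}. \<Sum>i<m. c i k)" by (rule sum.swap)
  finally show ?thesis .
qed

lemma span_a:
  assumes "i < m" "1 \<le> k" "k < m"
  shows "span A (a i) (a ((i + k) mod m)) = k"
proof -
  have "(int ((i + k) mod m) - int i) mod int m = ((int i + int k) mod int m - int i) mod int m"
    by (simp add: of_nat_mod)
  also have "\<dots> = (int i + int k - int i) mod int m" by (simp add: mod_diff_left_eq)
  also have "\<dots> = int k" using assms by simp
  finally show ?thesis unfolding span_def using idx_a assms m_pos cardA by (simp add: Let_def)
qed

lemma span_pairs_eq: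
  assumes "1 \<le> k" "k < m"
  shows "span_pairs A k = (\<lambda>i. (a i, a ((i + k) mod m))) ` {..<m}"
proof
  show "(\<lambda>i. (a i, a ((i + k) mod m))) ` {..<m} \<subseteq> span_pairs A k"
  proof
    fix x assume "x \<in> (\<lambda>i. (a i, a ((i + k) mod m))) ` {..<m}"
    then obtain i where i: "i < m" "x = (a i, a ((i + k) mod m))" by auto
    have ne: "i \<noteq> (i + k) mod m"
    proof (cases "i + k < m")
      case True then show ?thesis using assms by simp
    next
      case False
      then have "(i + k) mod m = i + k - m" using i assms by (simp add: le_mod_geq)
      then show ?thesis using assms False by simp
    qed
    show "x \<in> span_pairs A k" unfolding span_pairs_def using i ne span_a[OF i(1) assms] a_in m_pos a_eq_iff
      by auto
  qed
next
  show "span_pairs A k \<subseteq> (\<lambda>i. (a i, a ((i + k) mod m))) ` {..<m}"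
  proof
    fix x assume x: "x \<in> span_pairs A k"
    then obtain u v where uv: "x = (u, v)" "u \<in> A" "v \<in> A" "u \<noteq> v" "span A u v = k"
      unfolding span_pairs_def by auto
    obtain i where i: "i < m" "u = a i" using uv(2) A_eq by blast
    obtain j where j: "j < m" "v = a j" using uv(3) A_eq by blast
    note ij = i(1) j(1) i(2) j(2)
    define r where "r = nat ((int j - int i) mod int m)"
    have "span A u v = (if r = 0 then m else r)"
      unfolding span_def r_def using ij idx_a cardA by (simp add: Let_def)
    then have "r = k" using uv assms by (auto split: if_splits)
    then have rk: "(int j - int i) mod int m = int k" unfolding r_def using assms(1) by (simp add: nat_eq_iff split: if_splits)
    have "int j = int j mod int m" using ij by simp
    also have "\<dots> = (int i + (int j - int i)) mod int m" by simp
    also have "\<dots> = (int i + int k) mod int m" using rk by (metis mod_add_right_eq)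
    finally have "j = (i + k) mod m" by (metis of_nat_add of_nat_eq_iff of_nat_mod)
    then show "x \<in> (\<lambda>i. (a i, a ((i + k) mod m))) ` {..<m}" using uv ij by auto
  qed
qed

lemma inj_pairs: "inj_on (\<lambda>i. (a i, a ((i + k) mod m))) {..<m}"
  using a_inj by (auto simp: inj_on_def)

lemma sigma_eq:
  assumes "1 \<le> k" "k < m"
  shows "sigma n A k = image_mset (\<lambda>i. c i k) (mset_set {..<m})"
proof -
  have "sigma n A k = image_mset (\<lambda>(u, v). cdist n u v) (image_mset (\<lambda>i. (a i, a ((i + k) mod m))) (mset_set {..<m}))"
    unfolding sigma_def span_pairs_eq[OF assms] using inj_pairs by (simp add: image_mset_mset_set)
  also have "\<dots> = image_mset (\<lambda>i. c i k) (mset_set {..<m})"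
    by (simp add: multiset.map_comp o_def) (intro image_mset_cong, use cdist_a' assms in auto)
  finally show ?thesis .
qed

lemma sigma_star_eq:
  assumes "1 \<le> k" "k < m"
  shows "sigma_star n A k = image_mset (\<lambda>i. D i k) (mset_set {..<m})"
proof -
  have "sigma_star n A k = image_mset (\<lambda>(u, v). dstar n u v) (image_mset (\<lambda>i. (a i, a ((i + k) mod m))) (mset_set {..<m}))"
    unfolding sigma_star_def span_pairs_eq[OF assms] using inj_pairs by (simp add: image_mset_mset_set)
  also have "\<dots> = image_mset (\<lambda>i. D i k) (mset_set {..<m})"
    by (simp add: multiset.map_comp o_def) (intro image_mset_cong, use dstar_a' assms in auto)
  finally show ?thesis .
qed

end



definition Bd :: "nat \<Rightarrow> nat \<Rightarrow> nat \<Rightarrow> nat" where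
  "Bd n m k = (if 2 * k < m then k * n else if 2 * k = m then m * (n div 2) else (m - k) * n)"

context cyc begin

lemma c_le_D: "c j k \<le> D j k" unfolding c_def by simp
lemma c_le_compl: "c j k \<le> n - D j k" unfolding c_def by simp
lemma c_le_half: "c j k \<le> n div 2" unfolding c_def by linarith
lemma c_mod: "c (j mod m) k = c j k" unfolding c_def using D_mod by simp

lemma sum_compl: assumes "k < m" shows "(\<Sum>i<m. n - D i k) = m * n - k * n"
proof -
  have "(\<Sum>i<m. n - D i k) = (\<Sum>i<m. n) - (\<Sum>i<m. D i k)"
    by (rule sum_subtractf_nat) (use D_lt assms in \<open>auto intro: less_imp_le\<close>)
  then show ?thesis using sumD by simp
qed

lemma sum_c_le: assumes "1 \<le> k" "k < m" shows "(\<Sum>i<m. c i k) \<le> Bd n m k"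
proof (cases "2 * k < m")
  case True
  have "(\<Sum>i<m. c i k) \<le> (\<Sum>i<m. D i k)" by (rule sum_mono) (rule c_le_D)
  then show ?thesis using True sumD unfolding Bd_def by simp
next
  case False
  show ?thesis
  proof (cases "2 * k = m")
    case True
    have "(\<Sum>i<m. c i k) \<le> (\<Sum>i<m. n div 2)" by (rule sum_mono) (rule c_le_half)
    then show ?thesis using True unfolding Bd_def by simp
  next
    case F2: False
    have "(\<Sum>i<m. c i k) \<le> (\<Sum>i<m. n - D i k)" by (rule sum_mono) (rule c_le_compl)
    then show ?thesis using False F2 sum_compl assms unfolding Bd_def by (simp add: diff_mult_distrib)
  qed
qed

lemma W_le: "2 * W n A \<le> (\<Sum>k\<in>{1..<m}. Bd n m k)"
  unfolding W_index by (rule sum_mono) (use sum_c_le in auto)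

definition Q4p where
  "Q4p \<longleftrightarrow> (\<forall>i k. 1 \<le> k \<and> 2 * k < m \<longrightarrow> 2 * D i k \<le> n) \<and>
     (even m \<longrightarrow> (\<forall>i. c i (m div 2) = n div 2))"

lemma W_eq: assumes "Q4p" shows "2 * W n A = (\<Sum>k\<in>{1..<m}. Bd n m k)"
  unfolding W_index
proof (rule sum.cong[OF refl])
  fix k assume k: "k \<in> {1..<m}"
  show "(\<Sum>i<m. c i k) = Bd n m k"
  proof (cases "2 * k < m")
    case True
    have "c i k = D i k" for i
    proof -
      have "2 * D i k \<le> n" using assms True k unfolding Q4p_def by auto
      then show ?thesis unfolding c_def by simp
    qed
    then show ?thesis using True sumD unfolding Bd_def by simp
  next
    case False
    show ?thesis
    proof (cases "2 * k = m")
      case True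
      then have "c i k = n div 2" for i using assms unfolding Q4p_def by auto
      then show ?thesis using True unfolding Bd_def by simp
    next
      case F2: False
      have "c i k = n - D i k" for i
      proof -
        have h: "\<forall>i k. 1 \<le> k \<and> 2 * k < m \<longrightarrow> 2 * D i k \<le> n" using assms unfolding Q4p_def by blast
        have "1 \<le> m - k" "2 * (m - k) < m" using k False F2 by auto
        then have "2 * D (i + k) (m - k) \<le> n" using h by blast
        moreover have "D (i + k) (m - k) = n - D i k" using D_compl k by simp
        ultimately show ?thesis unfolding c_def by simp
      qed
      then have "(\<Sum>i<m. c i k) = m * n - k * n" using sum_compl k by simp
      then show ?thesis using False F2 unfolding Bd_def by (simp add: diff_mult_distrib)
    qed
  qed
qed

lemma eq_from_sum:
  assumes "finite S" "\<forall>x\<in>S. f x \<le> (g x :: nat)" "sum f S = sum g S"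
  shows "\<forall>x\<in>S. f x = g x"
proof (rule ccontr)
  assume "\<not> (\<forall>x\<in>S. f x = g x)"
  then obtain x where "x \<in> S" "f x < g x" using assms(2) by (meson le_neq_implies_less)
  then have "sum f S < sum g S" using sum_strict_mono_ex1[OF assms(1,2)] by blast
  then show False using assms(3) by simp
qed

definition Q4f where
  "Q4f \<longleftrightarrow> (\<forall>k::nat. 1 \<le> k \<and> 2 * k < m \<longrightarrow> sigma n A k = sigma_star n A k)
         \<and> (even m \<longrightarrow> set_mset (sigma n A (m div 2)) = {n div 2})"

lemma Q4f_iff: "Q4f \<longleftrightarrow> Q4p"
proof -
  have A1: "sigma n A k = sigma_star n A k \<longleftrightarrow> (\<forall>i. 2 * D i k \<le> n)" if k: "1 \<le> k" "2 * k < m" for k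
  proof
    assume "sigma n A k = sigma_star n A k"
    then have "image_mset (\<lambda>i. c i k) (mset_set {..<m}) = image_mset (\<lambda>i. D i k) (mset_set {..<m})"
      using sigma_eq sigma_star_eq k by simp
    then have "sum_mset (image_mset (\<lambda>i. c i k) (mset_set {..<m})) = sum_mset (image_mset (\<lambda>i. D i k) (mset_set {..<m}))"
      by simp
    then have "(\<Sum>i<m. c i k) = (\<Sum>i<m. D i k)" by (simp add: sum_unfold_sum_mset)
    then have all: "\<forall>i\<in>{..<m}. c i k = D i k"
      using eq_from_sum[of "{..<m}" "\<lambda>i. c i k" "\<lambda>i. D i k"] c_le_D by simp
    have cD: "c i k = D i k" for i
    proof -
      have "c (i mod m) k = D (i mod m) k" using all m_pos by simp
      then show ?thesis using c_mod D_mod by simp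
    qed
    show "\<forall>i. 2 * D i k \<le> n"
    proof
      fix i
      have "D i k \<le> n - D i k" using cD[of i] unfolding c_def by (metis min.absorb_iff1)
      then show "2 * D i k \<le> n" by arith
    qed
  next
    assume "\<forall>i. 2 * D i k \<le> n"
    then have "c i k = D i k" for i
    proof -
      assume "\<forall>i. 2 * D i k \<le> n"
      then have "2 * D i k \<le> n" by blast
      then have "D i k \<le> n - D i k" by arith
      then show ?thesis unfolding c_def by simp
    qed
    then show "sigma n A k = sigma_star n A k" using sigma_eq sigma_star_eq k by simp
  qed
  have A2: "set_mset (sigma n A (m div 2)) = {n div 2} \<longleftrightarrow> (\<forall>i. c i (m div 2) = n div 2)"
  proof -
    have "set_mset (sigma n A (m div 2)) = (\<lambda>i. c i (m div 2)) ` {..<m}"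
      using sigma_eq[of "m div 2"] m2 by simp
    moreover have "(\<lambda>i. c i (m div 2)) ` {..<m} = {n div 2} \<longleftrightarrow> (\<forall>i<m. c i (m div 2) = n div 2)"
      using m_pos by auto
    moreover have "(\<forall>i<m. c i (m div 2) = n div 2) \<longleftrightarrow> (\<forall>i. c i (m div 2) = n div 2)"
    proof
      assume h: "\<forall>i<m. c i (m div 2) = n div 2"
      show "\<forall>i. c i (m div 2) = n div 2"
      proof
        fix i
        have "c (i mod m) (m div 2) = n div 2" using h m_pos by simp
        then show "c i (m div 2) = n div 2" using c_mod by simp
      qed
    qed simp
    ultimately show ?thesis by simp
  qed
  show ?thesis unfolding Q4f_def Q4p_def using A1 A2 by blast
qed

end



lemma g_lower:
  fixes t n :: nat assumes "2 \<le> t" "t < n"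
  shows "int (min (t - 1) (n - (t - 1))) - int (min t (n - t)) \<ge> -1"
    and "n + 1 \<le> 2 * t \<Longrightarrow> int (min (t - 1) (n - (t - 1))) - int (min t (n - t)) \<ge> 0"
    and "n + 2 \<le> 2 * t \<Longrightarrow> int (min (t - 1) (n - (t - 1))) - int (min t (n - t)) \<ge> 1"
  using assms by (auto simp: min_def)

lemma sumL:
  fixes h m :: nat assumes "1 \<le> h" "2 * h \<le> m" "m \<le> 2 * h + 1"
  shows "(\<Sum>l\<in>{1..<m}. (if l < h then -1 else if l < m - h then 0 else 1) :: int) = 1"
proof -
  define L where "L = (\<lambda>l::nat. (if l < h then -1 else if l < m - h then 0 else 1) :: int)"
  have "sum L {1..<m} = sum L {1..<h} + sum L {h..<m}"
    using assms by (intro sum.atLeastLessThan_concat[symmetric]) auto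
  also have "sum L {h..<m} = sum L {h..<m - h} + sum L {m - h..<m}"
    using assms by (intro sum.atLeastLessThan_concat[symmetric]) auto
  also have "sum L {1..<h} = (\<Sum>l\<in>{1..<h}. -1)" by (rule sum.cong) (auto simp: L_def)
  also have "sum L {h..<m - h} = (\<Sum>l\<in>{h..<m - h}. 0)" by (rule sum.cong) (auto simp: L_def)
  also have "sum L {m - h..<m} = (\<Sum>l\<in>{m - h..<m}. 1)" by (rule sum.cong) (use assms in \<open>auto simp: L_def\<close>)
  finally show ?thesis unfolding L_def using assms by simp
qed

context cyc begin

lemma cong_a: assumes "i < m"
  shows "int (a ((i + l) mod m)) mod int n = (int (a i) + int (D i l)) mod int n"
proof -
  have "int (a ((i + l) mod m)) mod int n = int (P (i + l)) mod int n" using P_cong by simp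
  also have "int (P (i + l)) = int (a i) + int (D i l)" unfolding D_def using P_le[of i "i + l"] P_a[OF assms] by simp
  finally show ?thesis .
qed

lemma D_0: "D j 0 = 0" unfolding D_def by simp

lemma sum_rest: assumes "i < m"
  shows "(\<Sum>b\<in>A - {a i}. f b) = (\<Sum>l\<in>{1..<m}. (f (a ((i + l) mod m)) :: nat))"
proof -
  have "f (a i) + (\<Sum>b\<in>A - {a i}. f b) = sum f A" using sum.remove[OF finA a_in[OF assms], of f] by simp
  also have "\<dots> = (\<Sum>j<m. f (a j))" by (rule sumA)
  also have "\<dots> = (\<Sum>l<m. f (a ((i + l) mod m)))" using sum_shift[of i "\<lambda>j. f (a j)"] assms by simp
  also have "{..<m} = insert 0 {1..<m}" using m_pos by auto
  also have "(\<Sum>l\<in>insert 0 {1..<m}. f (a ((i + l) mod m))) = f (a i) + (\<Sum>l\<in>{1..<m}. f (a ((i + l) mod m)))"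
    using assms by simp
  finally show ?thesis by simp
qed

definition h where "h = m div 2"
definition bad where "bad i \<longleftrightarrow> (if odd m then n < 2 * D i h else n + 2 \<le> 2 * D i h)"

lemma h_facts: "1 \<le> h" "2 * h \<le> m" "m \<le> 2 * h + 1" "h < m" using m2 unfolding h_def by auto

lemma move:
  assumes L: "is_local_maximizer n A" and i: "i < m" and b: "bad i"
  shows "D i 1 = 1"
proof (rule ccontr)
  assume "D i 1 \<noteq> 1"
  then have D1: "2 \<le> D i 1" using D_pos[of 1 i] by simp
  define u where "u = a i"
  define v where "v = (a i + 1) mod n"
  have uA: "u \<in> A" unfolding u_def using a_in i by simp
  have vn: "v \<in> {0..<n}" unfolding v_def using n_pos by simp
  have dv: "dstar n u v = 1"
  proof (unfold u_def v_def, rule dstar_eq)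
    show "1 < n" using m_le_n m2 by simp
    have "int ((a i + 1) mod n) = (int (a i) + 1) mod int n" by (simp add: of_nat_mod ac_simps)
    then show "int ((a i + 1) mod n) mod int n = (int (a i) + int 1) mod int n" by simp
  qed
  have vA: "v \<notin> A"
  proof
    assume "v \<in> A"
    then obtain j where j: "j < m" "v = a j" using A_eq by blast
    define l where "l = (j + (m - i)) mod m"
    have l: "l < m" "(i + l) mod m = j" unfolding l_def using shift_inv2 i j m_pos by auto
    have "dstar n u v = D i l" unfolding u_def using dstar_a'[OF i l(1)] l j by simp
    then have "D i l = 1" using dv by simp
    moreover have "l \<noteq> 0" using \<open>D i l = 1\<close> D_0 by (metis zero_neq_one)
    then have "D i 1 \<le> D i l" using D_mono[of 1 l i] by (cases "l = 1") auto
    ultimately show False using D1 by simp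
  qed
  have adj: "cyc_adj n u v" unfolding cyc_adj_def u_def v_def by simp
  define C where "C = A - {u}"
  have pert: "perturbation n A ((A - {u}) \<union> {v})"
    unfolding perturbation_def using uA vn vA adj by blast
  then have le: "W n (insert v C) \<le> W n A" using L unfolding is_local_maximizer_def C_def by simp
  have finC: "finite C" unfolding C_def using finA by simp
  have AC: "A = insert u C" unfolding C_def using uA by auto
  have "2 * W n (insert v C) = 2 * W n C + 2 * (\<Sum>b\<in>C. cdist n v b)"
    by (rule W2_insert) (use finC vA in \<open>auto simp: C_def\<close>)
  moreover have "2 * W n A = 2 * W n C + 2 * (\<Sum>b\<in>C. cdist n u b)"
    unfolding AC by (rule W2_insert) (use finC in \<open>auto simp: C_def\<close>)
  ultimately have sle: "(\<Sum>b\<in>C. cdist n v b) \<le> (\<Sum>b\<in>C. cdist n u b)" using le by simp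
  have "(\<Sum>b\<in>C. cdist n v b) = (\<Sum>l\<in>{1..<m}. cdist n v (a ((i + l) mod m)))"
    unfolding C_def u_def by (rule sum_rest[OF i])
  moreover have "(\<Sum>b\<in>C. cdist n u b) = (\<Sum>l\<in>{1..<m}. cdist n u (a ((i + l) mod m)))"
    unfolding C_def u_def by (rule sum_rest[OF i])
  moreover have cu: "cdist n u (a ((i + l) mod m)) = min (D i l) (n - D i l)" if "l \<in> {1..<m}" for l
    using cdist_a'[OF i, of l] that unfolding u_def c_def by simp
  moreover have cv: "cdist n v (a ((i + l) mod m)) = min (D i l - 1) (n - (D i l - 1))" if l: "l \<in> {1..<m}" for l
  proof -
    have t2: "2 \<le> D i l" using D1 D_mono[of 1 l i] l by (cases "l = 1") auto
    have tn: "D i l < n" using D_lt l by simp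
    have ds: "dstar n v (a ((i + l) mod m)) = D i l - 1"
    proof (rule dstar_eq)
      show "D i l - 1 < n" using tn by simp
      have "int (a ((i + l) mod m)) mod int n = (int (a i) + int (D i l)) mod int n" by (rule cong_a[OF i])
      also have "int (a i) + int (D i l) = (int (a i) + 1) + int (D i l - 1)" using t2 by simp
      also have "(int (a i) + 1 + int (D i l - 1)) mod int n = (int v + int (D i l - 1)) mod int n"
        unfolding v_def by (simp add: mod_add_left_eq zmod_int ac_simps)
      finally show "int (a ((i + l) mod m)) mod int n = (int v + int (D i l - 1)) mod int n" .
    qed
    then have "dstar n (a ((i + l) mod m)) v = n - (D i l - 1)"
      using dstar_swap[of n v "a ((i + l) mod m)"] n_pos t2 by simp
    then show ?thesis unfolding cdist_def using ds by simp
  qed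
  ultimately have S: "(\<Sum>l\<in>{1..<m}. min (D i l - 1) (n - (D i l - 1))) \<le> (\<Sum>l\<in>{1..<m}. min (D i l) (n - D i l))"
    using sle by (metis (no_types, lifting) sum.cong)
  define g where "g l = int (min (D i l - 1) (n - (D i l - 1))) - int (min (D i l) (n - D i l))" for l
  have "(\<Sum>l\<in>{1..<m}. (if l < h then -1 else if l < m - h then 0 else 1) :: int) \<le> (\<Sum>l\<in>{1..<m}. g l)"
  proof (rule sum_mono)
    fix l assume l: "l \<in> {1..<m}"
    have t2: "2 \<le> D i l" using D1 D_mono[of 1 l i] l by (cases "l = 1") auto
    have tn: "D i l < n" using D_lt l by simp
    show "(if l < h then -1 else if l < m - h then 0 else 1) \<le> g l"
    proof (cases "l < h")
      case True then show ?thesis using g_lower(1)[OF t2 tn] unfolding g_def by simp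
    next
      case F: False
      show ?thesis
      proof (cases "l < m - h")
        case True
        have "n + 1 \<le> 2 * D i l"
        proof (cases "odd m")
          case True
          then have "n < 2 * D i h" using b unfolding bad_def by simp
          moreover have "D i h \<le> D i l" using D_mono[of h l i] F by (cases "h = l") auto
          ultimately show ?thesis by simp
        next
          case False
          then have "n + 2 \<le> 2 * D i h" using b unfolding bad_def by simp
          moreover have "D i h \<le> D i l" using D_mono[of h l i] F by (cases "h = l") auto
          ultimately show ?thesis by simp
        qed
        then show ?thesis using g_lower(2)[OF t2 tn] F True unfolding g_def by simp
      next
        case F2: False
        have "n + 2 \<le> 2 * D i l"
        proof (cases "odd m")
          case True
          then have "n < 2 * D i h" using b unfolding bad_def by simp
          moreover have "D i h < D i l"
          proof -
            have "m - h = h + 1" using True unfolding h_def by presburger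
            then have "h < l" using F2 by simp
            then show ?thesis using D_mono by simp
          qed
          ultimately show ?thesis by simp
        next
          case False
          then have "n + 2 \<le> 2 * D i h" using b unfolding bad_def by simp
          moreover have "D i h \<le> D i l" using D_mono[of h l i] F by (cases "h = l") auto
          ultimately show ?thesis by simp
        qed
        then show ?thesis using g_lower(3)[OF t2 tn] F F2 unfolding g_def by simp
      qed
    qed
  qed
  then have "1 \<le> (\<Sum>l\<in>{1..<m}. g l)" using sumL[OF h_facts(1-3)] by simp
  moreover have "(\<Sum>l\<in>{1..<m}. g l) = int (\<Sum>l\<in>{1..<m}. min (D i l - 1) (n - (D i l - 1))) - int (\<Sum>l\<in>{1..<m}. min (D i l) (n - D i l))"
    unfolding g_def by (simp only: sum_subtractf of_nat_sum)
  moreover have "int (\<Sum>l\<in>{1..<m}. min (D i l - 1) (n - (D i l - 1))) \<le> int (\<Sum>l\<in>{1..<m}. min (D i l) (n - D i l))"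
    using S by (simp only: of_nat_le_iff)
  ultimately show False by linarith
qed

end



lemma min_half: fixes x n :: nat assumes "n \<le> 2 * x + 1" "2 * x \<le> n + 1"
  shows "min x (n - x) = n div 2"
  using assms by presburger

context cyc begin

lemma bad_mod: "bad (i mod m) = bad i" unfolding bad_def using D_mod by simp

lemma bad_step: assumes "bad x" "D x 1 = 1" shows "bad (Suc x)"
proof -
  have "D x (1 + h) = D x 1 + D (x + 1) h" by (rule D_add)
  moreover have "D x (h + 1) = D x h + D (x + h) 1" by (rule D_add)
  moreover have "0 < D (x + h) 1" by (rule D_pos) simp
  ultimately have "D x h \<le> D (Suc x) h" using assms(2) by (simp add: add.commute)
  then show ?thesis using assms(1) unfolding bad_def by (auto split: if_splits)
qed

lemma no_bad: assumes L: "is_local_maximizer n A" shows "\<not> bad i0"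
proof
  assume b0: "bad i0"
  have all: "bad (i0 + j)" for j
  proof (induction j)
    case 0 then show ?case using b0 by simp
  next
    case (Suc j)
    have "bad ((i0 + j) mod m)" using Suc bad_mod by simp
    then have "D ((i0 + j) mod m) 1 = 1" using move[OF L] m_pos by simp
    then have "D (i0 + j) 1 = 1" using D_mod by simp
    then show ?case using bad_step Suc by simp
  qed
  have ball: "bad i" if "i < m" for i
  proof -
    have "1 * i0 \<le> m * i0" using m_pos by (intro mult_le_mono1) simp
    then have "i0 \<le> m * i0" by (simp only: mult_1)
    then have "i0 \<le> i + m * i0" by linarith
    then have "bad (i + m * i0)" using all[of "i + m * i0 - i0"] by simp
    moreover have "(i + m * i0) mod m = i" using that by simp
    ultimately show ?thesis using bad_mod by metis
  qed
  have sD: "(\<Sum>i<m. D i h) = h * n" by (rule sumD)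
  show False
  proof (cases "odd m")
    case True
    then have "\<forall>i\<in>{..<m}. n < 2 * D i h" using ball unfolding bad_def by auto
    then have "(\<Sum>i<m. n) < (\<Sum>i<m. 2 * D i h)" using m_pos by (intro sum_strict_mono) auto
    then have "m * n < 2 * (h * n)" using sD by (simp add: sum_distrib_left[symmetric])
    moreover have "2 * h * n \<le> m * n" using h_facts by simp
    ultimately show False by simp
  next
    case False
    then have "\<forall>i\<in>{..<m}. n + 2 \<le> 2 * D i h" using ball unfolding bad_def by auto
    then have "(\<Sum>i<m. n + 2) \<le> (\<Sum>i<m. 2 * D i h)" by (intro sum_mono) auto
    then have "m * (n + 2) \<le> 2 * (h * n)" using sD by (simp add: sum_distrib_left[symmetric])
    moreover have "2 * h = m" using False unfolding h_def by simp
    ultimately show False using m_pos by (simp add: algebra_simps)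
  qed
qed

definition Q3p where
  "Q3p \<longleftrightarrow> (odd m \<longrightarrow> (\<forall>i. 2 * D i h \<le> n)) \<and> (even m \<longrightarrow> (\<forall>i. n \<le> 2 * D i h + 1 \<and> 2 * D i h \<le> n + 1))"

lemma L_Q3p: assumes "is_local_maximizer n A" shows Q3p
  unfolding Q3p_def
proof (intro conjI impI allI)
  fix i assume "odd m"
  then show "2 * D i h \<le> n" using no_bad[OF assms, of i] unfolding bad_def by simp
next
  fix i assume ev: "even m"
  have "\<not> bad i" "\<not> bad (i + h)" using no_bad[OF assms] by auto
  then have 1: "2 * D i h \<le> n + 1" "2 * D (i + h) h \<le> n + 1" using ev unfolding bad_def by auto
  have "m - h = h" using ev unfolding h_def by presburger
  then have "D (i + h) h = n - D i h" using D_compl[of h i] h_facts by simp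
  then show "n \<le> 2 * D i h + 1" "2 * D i h \<le> n + 1" using 1 D_lt[of h i] h_facts by auto
qed

lemma Q3p_Q4p: assumes Q3p shows Q4p
  unfolding Q4p_def
proof (intro conjI impI allI)
  fix i k assume k: "1 \<le> k \<and> 2 * k < m"
  show "2 * D i k \<le> n"
  proof (cases "odd m")
    case True
    then have "k \<le> h" using k unfolding h_def by presburger
    then have "D i k \<le> D i h" using D_mono[of k h i] by (cases "k = h") auto
    moreover have "2 * D i h \<le> n" using assms True unfolding Q3p_def by blast
    ultimately show ?thesis by simp
  next
    case False
    then have "k < h" using k unfolding h_def by presburger
    then have "D i k < D i h" using D_mono by simp
    moreover have "2 * D i h \<le> n + 1" using assms False unfolding Q3p_def by blast
    ultimately show ?thesis by simp
  qed
next
  fix i assume ev: "even m"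
  then have "n \<le> 2 * D i h + 1" "2 * D i h \<le> n + 1" using assms unfolding Q3p_def by auto
  then show "c i (m div 2) = n div 2" unfolding c_def h_def[symmetric] by (rule min_half)
qed

definition Q3f where
  "Q3f \<longleftrightarrow> (odd m \<longrightarrow> set_mset (sigma_star n A (m div 2)) \<subseteq> {1..n div 2})
         \<and> (even m \<longrightarrow> set_mset (sigma_star n A (m div 2)) \<subseteq> {n div 2, (n + 1) div 2})"

lemma allmod: "(\<forall>i<m. Q (D i k)) \<longleftrightarrow> (\<forall>i. Q (D i k))"
proof
  assume h: "\<forall>i<m. Q (D i k)"
  show "\<forall>i. Q (D i k)"
  proof
    fix i
    have "Q (D (i mod m) k)" using h m_pos by simp
    then show "Q (D i k)" using D_mod by simp
  qed
qed simp

lemma Q3f_iff: "Q3f \<longleftrightarrow> Q3p"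
proof -
  have st: "set_mset (sigma_star n A (m div 2)) = (\<lambda>i. D i h) ` {..<m}"
    using sigma_star_eq[of h] h_facts unfolding h_def by simp
  have o: "(\<forall>i<m. D i h \<in> {1..n div 2}) \<longleftrightarrow> (\<forall>i. 2 * D i h \<le> n)"
  proof -
    have "(\<forall>i<m. D i h \<in> {1..n div 2}) \<longleftrightarrow> (\<forall>i. D i h \<in> {1..n div 2})"
      by (rule allmod)
    also have "\<dots> \<longleftrightarrow> (\<forall>i. 2 * D i h \<le> n)"
    proof -
      have "D i h \<in> {1..n div 2} \<longleftrightarrow> 2 * D i h \<le> n" for i
      proof -
        have "0 < D i h" using D_pos h_facts by simp
        then show ?thesis by simp presburger
      qed
      then show ?thesis by simp
    qed
    finally show ?thesis .
  qed
  have e: "(\<forall>i<m. D i h \<in> {n div 2, (n + 1) div 2}) \<longleftrightarrow> (\<forall>i. n \<le> 2 * D i h + 1 \<and> 2 * D i h \<le> n + 1)"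
  proof -
    have "(\<forall>i<m. D i h \<in> {n div 2, (n + 1) div 2}) \<longleftrightarrow> (\<forall>i. D i h \<in> {n div 2, (n + 1) div 2})"
      by (rule allmod)
    also have "\<dots> \<longleftrightarrow> (\<forall>i. n \<le> 2 * D i h + 1 \<and> 2 * D i h \<le> n + 1)"
    proof -
      have "D i h \<in> {n div 2, (n + 1) div 2} \<longleftrightarrow> (n \<le> 2 * D i h + 1 \<and> 2 * D i h \<le> n + 1)" for i
        by simp presburger
      then show ?thesis by simp
    qed
    finally show ?thesis .
  qed
  show ?thesis unfolding Q3f_def Q3p_def st using o e by (auto simp: image_subset_iff)
qed

lemma Q4p_max: assumes Q4p shows "is_maximizer n A"
  unfolding is_maximizer_def
proof (intro allI impI)
  fix B assume B: "B \<subseteq> {0..<n} \<and> card B = card A"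
  interpret Bc: cyc n B m using B cardA m2 by unfold_locales auto
  have "2 * W n B \<le> (\<Sum>k\<in>{1..<m}. Bd n m k)" by (rule Bc.W_le)
  also have "\<dots> = 2 * W n A" using W_eq[OF assms] by simp
  finally show "W n B \<le> W n A" by simp
qed

lemma max_L: assumes "is_maximizer n A" shows "is_local_maximizer n A"
  unfolding is_local_maximizer_def
proof (intro allI impI)
  fix B assume "perturbation n A B"
  then obtain u v where uv: "u \<in> A" "v \<in> {0..<n}" "v \<notin> A" "B = (A - {u}) \<union> {v}"
    unfolding perturbation_def by blast
  have "B \<subseteq> {0..<n}" using uv sub by auto
  moreover have "card B = card A"
  proof -
    have "card B = Suc (card (A - {u}))" using uv finA by simp
    moreover have "card (A - {u}) = card A - 1" using uv finA by (simp add: card_Diff_singleton)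
    ultimately show ?thesis using cardA m2 by simp
  qed
  ultimately show "W n B \<le> W n A" using assms unfolding is_maximizer_def by blast
qed

lemma main:
  "(is_maximizer n A \<longleftrightarrow> is_local_maximizer n A) \<and> (is_local_maximizer n A \<longleftrightarrow> Q3f) \<and> (is_local_maximizer n A \<longleftrightarrow> Q4f)"
proof -
  have 1: "is_local_maximizer n A \<Longrightarrow> Q4p" using L_Q3p Q3p_Q4p by blast
  have 2: "Q4p \<Longrightarrow> is_local_maximizer n A" using Q4p_max max_L by blast
  have 3: "is_maximizer n A \<longleftrightarrow> is_local_maximizer n A" using max_L Q4p_max 1 by blast
  have 4: "is_local_maximizer n A \<longleftrightarrow> Q3f" unfolding Q3f_iff using L_Q3p Q3p_Q4p 2 by blast
  have 5: "is_local_maximizer n A \<longleftrightarrow> Q4f" unfolding Q4f_iff using 1 2 by blast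
  show ?thesis using 3 4 5 by blast
qed

end

theorem mainTheorem13:
  fixes n m :: nat and A :: "nat set"
  assumes "n \<ge> 3" and "A \<subseteq> {0..<n}" and "card A = m" and "2 \<le> m" and "m \<le> n"
  shows "(is_maximizer n A \<longleftrightarrow> is_local_maximizer n A)
    \<and> (is_local_maximizer n A \<longleftrightarrow>
        ((odd m \<longrightarrow> set_mset (sigma_star n A (m div 2)) \<subseteq> {1..n div 2})
         \<and> (even m \<longrightarrow> set_mset (sigma_star n A (m div 2)) \<subseteq> {n div 2, (n + 1) div 2})))
    \<and> (is_local_maximizer n A \<longleftrightarrow>
        ((\<forall>k::nat. 1 \<le> k \<and> 2 * k < m \<longrightarrow> sigma n A k = sigma_star n A k)
         \<and> (even m \<longrightarrow> set_mset (sigma n A (m div 2)) = {n div 2})))"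
proof -
  interpret cyc n A m using assms by unfold_locales auto
  show ?thesis using main unfolding Q3f_def Q4f_def .
qed



end
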